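(* Let $G=(\Gamma,s)$ be a connected rooted graph and $p\in\mathrm{PF}(G)$. Define $V_M(p)=\{v\in\tilde V: p(v)\le\mathrm{mult}(vs)\}$ and, for $v\in\tilde V$, $p^{v+}=p+\sum_{w\in\tilde V\setminus\{v\}}\mathrm{mult}(ws)\mathbf 1_w$. Then $p$ is prime if and only if $p^{v+}\in\mathrm{PF}(G)$ for every $v\in V_M(p)$.
   Context: $\mathbb{N}=\{1,2,\dots\}$. A rooted graph $G=(\Gamma,s)$ is a finite undirected multigraph without loops with a distinguished vertex $s$ (the sink); $V$ is its vertex set, $\tilde V=V\setminus\{s\}$. $\mathrm{mult}(vw)$ is the number of edges between $v,w$; $\deg^A(v)=\sum_{w\in A}\mathrm{mult}(vw)$ for $A\subseteq V$. $\mathbf 1_w$ is the indicator function of $w$. A $G$-parking function is $p:\tilde V\to\mathbb{N}$ such that for every nonempty $S\subseteq\tilde V$ there is $v\in S$ with $p(v)\le\deg^{V\setminus S}(v)$; $\mathrm{PF}(G)$ is their set (the same definition is used for possibly disconnected rooted graphs). For $A\subseteq\tilde V$, $G^A$ is the induced subgraph on $A\cup\{s\}$ rooted at $s$. For an ordered pair $(A,B)$ of nonempty disjoint sets with $A\cup B=\tilde V$ and $p\in\mathrm{PF}(G)$, $p^A(v)=p(v)$ ($v\in A$) and $p^B(v)=p(v)-\deg^A(v)$ ($v\in B$); $p$ is decomposable w.r.t. $(A,B)$ if $p^A\in\mathrm{PF}(G^A)$ and $p^B\in\mathrm{PF}(G^B)$; $p$ is prime if it is decomposable w.r.t. no such $(A,B)$.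 *)

theory Defs
  imports Main
begin

text \<open>A rooted multigraph: finite vertex set V, sink s \<in> V, edge multiplicities
  mult :: 'a => 'a => nat (symmetric, no loops). Only values on V matter.\<close>

definition rooted_graph :: "'a set \<Rightarrow> 'a \<Rightarrow> ('a \<Rightarrow> 'a \<Rightarrow> nat) \<Rightarrow> bool" where
  "rooted_graph V s mult \<longleftrightarrow> finite V \<and> s \<in> V \<and>
     (\<forall>v\<in>V. \<forall>w\<in>V. mult v w = mult w v) \<and> (\<forall>v\<in>V. mult v v = 0)"

definition connected_graph :: "'a set \<Rightarrow> ('a \<Rightarrow> 'a \<Rightarrow> nat) \<Rightarrow> bool" where
  "connected_graph V mult \<longleftrightarrow>
     (\<forall>v\<in>V. \<forall>w\<in>V. (\<lambda>x y. x \<in> V \<and> y \<in> V \<and> 0 < mult x y)\<^sup>*\<^sup>* v w)"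

definition deg :: "('a \<Rightarrow> 'a \<Rightarrow> nat) \<Rightarrow> 'a set \<Rightarrow> 'a \<Rightarrow> nat" where
  "deg mult A v = (\<Sum>w\<in>A. mult v w)"

text \<open>G-parking functions of the rooted graph with vertex set V (sink s); only the
  values of p on V - {s} matter; values in \<nat> = {1,2,...}.\<close>
definition is_PF :: "'a set \<Rightarrow> 'a \<Rightarrow> ('a \<Rightarrow> 'a \<Rightarrow> nat) \<Rightarrow> ('a \<Rightarrow> int) \<Rightarrow> bool" where
  "is_PF V s mult p \<longleftrightarrow> (\<forall>v\<in>V - {s}. 1 \<le> p v) \<and>
     (\<forall>S. S \<subseteq> V - {s} \<and> S \<noteq> {} \<longrightarrow> (\<exists>v\<in>S. p v \<le> int (deg mult (V - S) v)))"

text \<open>Decomposability w.r.t. (A,B): p^A is a PF of G^A (induced on A \<union> {s}),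
  p^B = p - deg^A is a PF of G^B (induced on B \<union> {s}).\<close>
definition decomposable :: "'a set \<Rightarrow> 'a \<Rightarrow> ('a \<Rightarrow> 'a \<Rightarrow> nat) \<Rightarrow> ('a \<Rightarrow> int)
    \<Rightarrow> 'a set \<Rightarrow> 'a set \<Rightarrow> bool" where
  "decomposable V s mult p A B \<longleftrightarrow>
     is_PF (A \<union> {s}) s mult p \<and>
     is_PF (B \<union> {s}) s mult (\<lambda>v. p v - int (deg mult A v))"

definition prime_PF :: "'a set \<Rightarrow> 'a \<Rightarrow> ('a \<Rightarrow> 'a \<Rightarrow> nat) \<Rightarrow> ('a \<Rightarrow> int) \<Rightarrow> bool" where
  "prime_PF V s mult p \<longleftrightarrow>
     \<not> (\<exists>A B. A \<noteq> {} \<and> B \<noteq> {} \<and> A \<inter> B = {} \<and> A \<union> B = V - {s} \<and>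
            decomposable V s mult p A B)"

definition VM :: "'a set \<Rightarrow> 'a \<Rightarrow> ('a \<Rightarrow> 'a \<Rightarrow> nat) \<Rightarrow> ('a \<Rightarrow> int) \<Rightarrow> 'a set" where
  "VM V s mult p = {v \<in> V - {s}. p v \<le> int (mult v s)}"

definition plus_shift :: "'a set \<Rightarrow> 'a \<Rightarrow> ('a \<Rightarrow> 'a \<Rightarrow> nat) \<Rightarrow> ('a \<Rightarrow> int) \<Rightarrow> 'a \<Rightarrow> ('a \<Rightarrow> int)" where
  "plus_shift V s mult p v = (\<lambda>w. p w + (if w \<in> V - {s} - {v} then int (mult w s) else 0))"

end

theory Submission
  imports Defs
begin

lemma deg_split:
  assumes "finite X" "finite Y" "X \<inter> Y = {}"
  shows "deg m (X \<union> Y) v = deg m X v + deg m Y v"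
  unfolding deg_def using assms by (simp add: sum.union_disjoint)

lemma deg_mono:
  assumes "finite Y" "X \<subseteq> Y"
  shows "deg m X v \<le> deg m Y v"
  unfolding deg_def using assms by (simp add: sum_mono2)

lemma deg_single: "deg m {s} v = m v s"
  unfolding deg_def by simp

theorem corollary2p12:
  fixes V :: "'a set" and s :: 'a and mult :: "'a \<Rightarrow> 'a \<Rightarrow> nat" and p :: "'a \<Rightarrow> int"
  assumes "rooted_graph V s mult"
    and "connected_graph V mult"
    and "is_PF V s mult p"
  shows "prime_PF V s mult p \<longleftrightarrow>
           (\<forall>v\<in>VM V s mult p. is_PF V s mult (plus_shift V s mult p v))"
proof
  have fin: "finite V" and sV: "s \<in> V" using assms(1) unfolding rooted_graph_def by auto
  have p1: "\<And>w. w \<in> V - {s} \<Longrightarrow> 1 \<le> p w" using assms(3) unfolding is_PF_def by auto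
  have pS: "\<And>S. S \<subseteq> V - {s} \<Longrightarrow> S \<noteq> {} \<Longrightarrow> \<exists>v\<in>S. p v \<le> int (deg mult (V - S) v)"
    using assms(3) unfolding is_PF_def by auto
  {
    assume pr: "prime_PF V s mult p"
    show "\<forall>v\<in>VM V s mult p. is_PF V s mult (plus_shift V s mult p v)"
    proof
      fix v assume vVM: "v \<in> VM V s mult p"
      hence vV: "v \<in> V - {s}" and pv: "p v \<le> int (mult v s)" unfolding VM_def by auto
      define q where "q = plus_shift V s mult p v"
      have qge: "\<And>w. p w \<le> q w" unfolding q_def plus_shift_def by auto
      have qv: "q v = p v" unfolding q_def plus_shift_def by auto
      have qw: "\<And>w. w \<in> V - {s} \<Longrightarrow> w \<noteq> v \<Longrightarrow> q w = p w + int (mult w s)"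
        unfolding q_def plus_shift_def by auto
      define bad where "bad = (\<lambda>S. S \<subseteq> V - {s} \<and> (\<forall>w\<in>S. q w > int (deg mult (V - S) w)))"
      show "is_PF V s mult q"
        unfolding is_PF_def
      proof (intro conjI allI impI ballI)
        fix w assume "w \<in> V - {s}" thus "1 \<le> q w" using p1 qge by (meson order_trans)
      next
        fix S assume S: "S \<subseteq> V - {s} \<and> S \<noteq> {}"
        show "\<exists>v\<in>S. q v \<le> int (deg mult (V - S) v)"
        proof (rule ccontr)
          assume "\<not> ?thesis"
          hence badS: "bad S" using S unfolding bad_def by auto
          define U where "U = \<Union>{S. bad S}"
          have UV: "U \<subseteq> V - {s}" unfolding U_def bad_def by auto
          have badU: "bad U"
            unfolding bad_def
          proof (intro conjI ballI)
            show "U \<subseteq> V - {s}" by (rule UV)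
            fix w assume "w \<in> U"
            then obtain S' where S': "bad S'" "w \<in> S'" unfolding U_def by auto
            have "S' \<subseteq> U" using S' unfolding U_def by auto
            hence "deg mult (V - U) w \<le> deg mult (V - S') w" using fin by (intro deg_mono) auto
            thus "q w > int (deg mult (V - U) w)" using S' unfolding bad_def by force
          qed
          have SU: "S \<subseteq> U" using badS unfolding U_def by auto
          have vU: "v \<notin> U"
          proof
            assume "v \<in> U"
            have "mult v s = deg mult {s} v" by (simp add: deg_single)
            also have "\<dots> \<le> deg mult (V - U) v" using fin sV UV by (intro deg_mono) auto
            finally show False using badU \<open>v \<in> U\<close> pv qv unfolding bad_def by force
          qed
          define A where "A = V - {s} - U"
          have finA: "finite A" "finite U" using fin UV unfolding A_def by (auto intro: finite_subset)
          have VU: "V - U = A \<union> {s}" using sV UV unfolding A_def by auto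
          have dec: "decomposable V s mult p A U"
            unfolding decomposable_def
          proof (intro conjI)
            show "is_PF (A \<union> {s}) s mult p"
              unfolding is_PF_def
            proof (intro conjI allI impI ballI)
              fix w assume "w \<in> A \<union> {s} - {s}" thus "1 \<le> p w" using p1 unfolding A_def by auto
            next
              fix T assume T: "T \<subseteq> A \<union> {s} - {s} \<and> T \<noteq> {}"
              show "\<exists>v\<in>T. p v \<le> int (deg mult (A \<union> {s} - T) v)"
              proof (rule ccontr)
                assume "\<not> ?thesis"
                hence Tp: "\<forall>u\<in>T. p u > int (deg mult (A \<union> {s} - T) u)" by auto
                have eq: "A \<union> {s} - T = V - (U \<union> T)" using T sV UV unfolding A_def by auto
                have "bad (U \<union> T)"
                  unfolding bad_def
                proof (intro conjI ballI)
                  show "U \<union> T \<subseteq> V - {s}" using UV T unfolding A_def by auto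
                  fix u assume u: "u \<in> U \<union> T"
                  show "q u > int (deg mult (V - (U \<union> T)) u)"
                  proof (cases "u \<in> U")
                    case True
                    have "deg mult (V - (U \<union> T)) u \<le> deg mult (V - U) u" using fin by (intro deg_mono) auto
                    thus ?thesis using badU True unfolding bad_def by force
                  next
                    case False
                    hence "u \<in> T" using u by auto
                    thus ?thesis using Tp qge[of u] eq by force
                  qed
                qed
                hence "U \<union> T \<subseteq> U" unfolding U_def by auto
                thus False using T unfolding A_def by auto
              qed
            qed
          next
            show "is_PF (U \<union> {s}) s mult (\<lambda>v. p v - int (deg mult A v))"
              unfolding is_PF_def
            proof (intro conjI allI impI ballI)
              fix w assume w: "w \<in> U \<union> {s} - {s}"
              hence wU: "w \<in> U" by auto
              have "deg mult (V - U) w = deg mult A w + mult w s"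
                unfolding VU using finA by (subst deg_split) (auto simp: deg_single A_def)
              moreover have "q w = p w + int (mult w s)" using qw wU UV vU by auto
              ultimately show "1 \<le> p w - int (deg mult A w)" using badU wU unfolding bad_def by force
            next
              fix T assume T: "T \<subseteq> U \<union> {s} - {s} \<and> T \<noteq> {}"
              then obtain u where u: "u \<in> T" "p u \<le> int (deg mult (V - T) u)"
                using pS[of T] UV by auto
              have eq: "V - T = A \<union> (U \<union> {s} - T)" using T sV UV unfolding A_def by auto
              have "deg mult (V - T) u = deg mult A u + deg mult (U \<union> {s} - T) u"
                unfolding eq using finA by (subst deg_split) (auto simp: A_def)
              thus "\<exists>v\<in>T. p v - int (deg mult A v) \<le> int (deg mult (U \<union> {s} - T) v)"
                using u by force
            qed
          qed
          moreover have "A \<noteq> {}" using vV vU unfolding A_def by auto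
          moreover have "U \<noteq> {}" using SU S by auto
          moreover have "A \<inter> U = {}" "A \<union> U = V - {s}" using UV unfolding A_def by auto
          ultimately show False using pr unfolding prime_PF_def by blast
        qed
      qed
    qed
  }
  {
    assume R: "\<forall>v\<in>VM V s mult p. is_PF V s mult (plus_shift V s mult p v)"
    show "prime_PF V s mult p"
      unfolding prime_PF_def
    proof
      assume "\<exists>A B. A \<noteq> {} \<and> B \<noteq> {} \<and> A \<inter> B = {} \<and> A \<union> B = V - {s} \<and> decomposable V s mult p A B"
      then obtain A B where AB: "A \<noteq> {}" "B \<noteq> {}" "A \<inter> B = {}" "A \<union> B = V - {s}"
        and PA: "is_PF (A \<union> {s}) s mult p"
        and PB: "is_PF (B \<union> {s}) s mult (\<lambda>v. p v - int (deg mult A v))"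
        unfolding decomposable_def by blast
      have sA: "s \<notin> A" "s \<notin> B" using AB(4) by auto
      have finA: "finite A" using fin AB(4) by (metis finite_Diff finite_Un)
      have "A \<subseteq> A \<union> {s} - {s} \<and> A \<noteq> {}" using sA AB(1) by auto
      then obtain v where v: "v \<in> A" "p v \<le> int (deg mult (A \<union> {s} - A) v)"
        using PA unfolding is_PF_def by blast
      have "A \<union> {s} - A = {s}" using sA by auto
      hence "v \<in> VM V s mult p" using v AB(4) unfolding VM_def by (auto simp: deg_single)
      hence "is_PF V s mult (plus_shift V s mult p v)" using R by auto
      then obtain w where w: "w \<in> B" "plus_shift V s mult p v w \<le> int (deg mult (V - B) w)"
        using AB unfolding is_PF_def by blast
      have wv: "w \<noteq> v" using w v AB(3) by auto
      have "V - B = A \<union> {s}" using AB sV by auto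
      hence "deg mult (V - B) w = deg mult A w + mult w s"
        using finA sA deg_split[of A "{s}" mult w] by (simp add: deg_single)
      moreover have "plus_shift V s mult p v w = p w + int (mult w s)"
        using w wv AB(4) unfolding plus_shift_def by auto
      moreover have "1 \<le> p w - int (deg mult A w)" using PB w sA unfolding is_PF_def by auto
      ultimately show False using w by auto
    qed
  }
qed

end
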